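(* Let $q=p^r$ with $p$ prime, $p\ne 2$, $p\ne 3$. Let $$f_2(x_1,x_2)=t\bigl(x_1^{q-2}+x_2^{q-2}\bigr).$$ Then the polynomial $t\bigl(f_2(x_1,x_2)+x_3^{q-2}\bigr)\in\mathbb{F}_q[x_1,x_2,x_3]$, reduced modulo $x_j^q-x_j$, has degree $3(q-2)$.
   Context: $\mathbb{F}_q$ is the finite field with $q$ elements, and $$t(x)=x+\sum_{k=0}^{q-2}x^k\in\mathbb{F}_q[x];$$ this polynomial swaps $0$ and $1$ and fixes every other element. Degree means the total degree of the reduced representative (degree $<q$ in each variable). *)

theory Defs
  imports "HOL-Computational_Algebra.Primes" "HOL-Library.Cardinality"
begin

text \<open>The polynomial t(x) = x + sum_{k=0}^{q-2} x^k over the finite field with q = CARD('a)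
  elements, viewed through its evaluation (a polynomial composed with polynomials evaluates
  pointwise by composition).\<close>
definition tfun :: "'a::{finite,field} \<Rightarrow> 'a" where
  "tfun x = x + (\<Sum>k \<in> {0..CARD('a) - 2}. x ^ k)"

text \<open>Polynomials in three variables x1,x2,x3 over 'a, given by their coefficient function on
  exponent triples. A polynomial is reduced (modulo x_j^q - x_j) if every exponent is < q.\<close>
definition reduced3 :: "(nat \<times> nat \<times> nat \<Rightarrow> 'a::{finite,field}) \<Rightarrow> bool" where
  "reduced3 c \<longleftrightarrow> (\<forall>a b d. c (a, b, d) \<noteq> 0 \<longrightarrow> a < CARD('a) \<and> b < CARD('a) \<and> d < CARD('a))"

definition eval3 :: "(nat \<times> nat \<times> nat \<Rightarrow> 'a::{finite,field}) \<Rightarrow> 'a \<Rightarrow> 'a \<Rightarrow> 'a \<Rightarrow> 'a" where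
  "eval3 c x1 x2 x3 =
     (\<Sum>(a, b, d) \<in> {0..<CARD('a)} \<times> {0..<CARD('a)} \<times> {0..<CARD('a)}.
        c (a, b, d) * x1 ^ a * x2 ^ b * x3 ^ d)"

text \<open>Total degree of a (reduced, hence finitely supported) polynomial.\<close>
definition totdeg3 :: "(nat \<times> nat \<times> nat \<Rightarrow> 'a::zero) \<Rightarrow> nat" where
  "totdeg3 c = Max {a + b + d | a b d. c (a, b, d) \<noteq> 0}"

end

theory Submission
  imports Defs "HOL-Computational_Algebra.Polynomial"
begin

lemma card_ge2: "CARD('a::{finite,field}) \<ge> 2"
proof -
  have "card {0::'a, 1} \<le> CARD('a)" by (rule card_mono) auto
  then show ?thesis by simp
qed

lemma char_q: "of_nat CARD('a::{finite,field}) = (0::'a)"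
proof -
  have "(\<Sum>y\<in>UNIV. y + 1) = (\<Sum>y\<in>(UNIV::'a set). y)"
    by (rule sum.reindex_bij_witness[of _ "\<lambda>y. y - 1" "\<lambda>y. y+1"]) auto
  then have "(\<Sum>y\<in>(UNIV::'a set). (1::'a)) = 0" by (simp add: sum.distrib)
  moreover have "(\<Sum>y\<in>(UNIV::'a set). (1::'a)) = of_nat CARD('a)" by simp
  ultimately show ?thesis by argo
qed

lemma pow_q1:
  assumes "(x::'a::{finite,field}) \<noteq> 0"
  shows "x ^ (CARD('a) - 1) = 1"
proof -
  let ?N = "UNIV - {0::'a}"
  have "(\<Prod>y\<in>?N. x * y) = (\<Prod>y\<in>?N. y)"
    by (rule prod.reindex_bij_witness[of _ "\<lambda>y. inverse x * y" "\<lambda>y. x * y"]) (use assms in auto)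
  moreover have "(\<Prod>y\<in>?N. x * y) = x ^ card ?N * (\<Prod>y\<in>?N. y)"
    by (simp add: prod.distrib)
  moreover have "(\<Prod>y\<in>?N. y) \<noteq> 0" by simp
  moreover have "card ?N = CARD('a) - 1" by (simp add: card_Diff_subset)
  ultimately show ?thesis by simp
qed

lemma inv_pow:
  assumes "CARD('a::{finite,field}) \<ge> 3"
  shows "(x::'a) ^ (CARD('a) - 2) = inverse x"
proof (cases "x = 0")
  case True then show ?thesis using assms by simp
next
  case False
  have "x ^ (CARD('a) - 2) * x = x ^ (CARD('a) - 1)"
  proof -
    have "CARD('a) - 1 = Suc (CARD('a) - 2)" using assms by arith
    then show ?thesis by (simp add: power_Suc2)
  qed
  then show ?thesis using False pow_q1[OF False] by (simp add: field_simps)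
qed

lemma exists_nonroot:
  assumes "1 \<le> k" "k < CARD('a::{finite,field}) - 1"
  shows "\<exists>a::'a. a \<noteq> 0 \<and> a ^ k \<noteq> 1"
proof (rule ccontr)
  assume "\<not> ?thesis"
  then have sub: "UNIV - {0} \<subseteq> {x::'a. poly (monom 1 k - 1) x = 0}"
    by (auto simp: poly_monom)
  have ne: "(monom (1::'a) k - 1) \<noteq> 0"
  proof
    assume "monom (1::'a) k - 1 = 0"
    then have "coeff (monom (1::'a) k - 1) k = 0" by simp
    then show False using assms by simp
  qed
  have "degree (monom (1::'a) k - 1) \<le> k"
    by (intro degree_diff_le) (auto simp: degree_monom_le)
  then have "card {x::'a. poly (monom 1 k - 1) x = 0} \<le> k"
    using card_poly_roots_bound[OF ne] by simp
  moreover have "card (UNIV - {0::'a}) \<le> card {x::'a. poly (monom 1 k - 1) x = 0}"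
    by (rule card_mono[OF _ sub]) simp
  moreover have "card (UNIV - {0::'a}) = CARD('a) - 1" by (simp add: card_Diff_subset)
  ultimately show False using assms by simp
qed

lemma power_sum:
  assumes "k < CARD('a::{finite,field}) - 1"
  shows "(\<Sum>x\<in>UNIV. (x::'a) ^ k) = 0"
proof (cases "k = 0")
  case True then show ?thesis using char_q[where 'a='a] by simp
next
  case False
  then have "1 \<le> k" by simp
  then obtain a :: 'a where a: "a \<noteq> 0" "a ^ k \<noteq> 1" using exists_nonroot[OF _ assms] by blast
  have "(\<Sum>x\<in>UNIV. (a * x) ^ k) = (\<Sum>x\<in>UNIV. (x::'a) ^ k)"
  proof (rule sum.reindex_bij_witness[of _ "\<lambda>y. inverse a * y" "\<lambda>y. a * y"])
    fix y :: 'a show "inverse a * (a * y) = y" using a(1) by (simp add: mult.assoc[symmetric])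
  next
    fix y :: 'a show "a * (inverse a * y) = y" using a(1) by (simp add: mult.assoc[symmetric])
  qed auto
  moreover have "(\<Sum>x\<in>UNIV. (a * x) ^ k) = a ^ k * (\<Sum>x\<in>UNIV. (x::'a) ^ k)"
    by (simp only: power_mult_distrib sum_distrib_left)
  ultimately have "(a ^ k - 1) * (\<Sum>x\<in>UNIV. (x::'a) ^ k) = 0"
    by (simp add: algebra_simps)
  then show ?thesis using a(2) by simp
qed

lemma power_sum_q1: "(\<Sum>x\<in>UNIV. (x::'a::{finite,field}) ^ (CARD('a) - 1)) = -1"
proof -
  have "(\<Sum>x\<in>UNIV. (x::'a) ^ (CARD('a) - 1)) = (\<Sum>x\<in>UNIV. if (x::'a) = 0 then 0 else (1::'a))"
  proof (rule sum.cong[OF refl])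
    fix x :: 'a
    show "x ^ (CARD('a) - 1) = (if x = 0 then 0 else (1::'a))"
      using card_ge2[where 'a='a] pow_q1[of x] by (cases "x = 0") auto
  qed
  also have "\<dots> = of_nat (card (UNIV - {0::'a}))"
    by (simp add: sum.If_cases Diff_eq Compl_eq)
  also have "\<dots> = of_nat (CARD('a) - 1)" by (simp add: card_Diff_subset)
  also have "\<dots> = of_nat CARD('a) - 1" using card_ge2[where 'a='a] by (simp add: of_nat_diff)
  finally show ?thesis using char_q[where 'a='a] by simp
qed

lemma power_sum_gen:
  assumes "k \<le> 2 * CARD('a::{finite,field}) - 3"
  shows "(\<Sum>x\<in>UNIV. (x::'a) ^ k) = (if k = CARD('a) - 1 then -1 else 0)"
proof -
  consider "k < CARD('a) - 1" | "k = CARD('a) - 1" | "k > CARD('a) - 1" by linarith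
  then show ?thesis
  proof cases
    case 1 then show ?thesis using power_sum by simp
  next
    case 2 then show ?thesis using power_sum_q1 by simp
  next
    case 3
    define m where "m = k - (CARD('a) - 1)"
    have m: "1 \<le> m" "m < CARD('a) - 1" "k = m + (CARD('a) - 1)" using 3 assms card_ge2[where 'a='a] by (auto simp: m_def)
    have "(\<Sum>x\<in>UNIV. (x::'a) ^ k) = (\<Sum>x\<in>UNIV. (x::'a) ^ m)"
    proof (rule sum.cong[OF refl])
      fix x :: 'a
      obtain n where n: "n = CARD('a) - 1" by blast
      have "k = m + n" using m n by simp
      moreover have "x \<noteq> 0 \<Longrightarrow> x ^ n = 1" using pow_q1[of x] n by simp
      ultimately show "x ^ k = x ^ m"
        using m(1) by (cases "x = 0") (auto simp: power_add)
    qed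
    then show ?thesis using power_sum[OF m(2)] 3 by simp
  qed
qed

lemma sum_inv_reindex: "(\<Sum>x\<in>UNIV. f (inverse x)) = (\<Sum>x\<in>UNIV. f (x::'a::{finite,field}))"
  by (rule sum.reindex_bij_witness[of _ inverse inverse]) auto

lemma sum_transl: "(\<Sum>x\<in>UNIV. f (a + x)) = (\<Sum>x\<in>UNIV. f (x::'a::{finite,field}))"
  by (rule sum.reindex_bij_witness[of _ "\<lambda>y. y - a" "\<lambda>y. a + y"]) auto

lemma sum_refl: "(\<Sum>x\<in>UNIV. f (a - x)) = (\<Sum>x\<in>UNIV. f (x::'a::{finite,field}))"
  by (rule sum.reindex_bij_witness[of _ "\<lambda>y. a - y" "\<lambda>y. a - y"]) auto

lemma inv_power_sum:
  assumes "e < CARD('a::{finite,field}) - 1"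
  shows "(\<Sum>x\<in>UNIV. inverse (x::'a) ^ e) = 0"
  using sum_inv_reindex[of "\<lambda>x::'a. x ^ e"] power_sum[OF assms] by simp

lemma tfun_eq:
  assumes "CARD('a::{finite,field}) \<ge> 3"
  shows "tfun (y::'a) = y + (if y = 0 then 1 else 0) - (if y = 1 then 1 else 0)"
proof -
  obtain n where n: "n = CARD('a) - 1" by blast
  have set: "{0..CARD('a) - 2} = {..<n}" using n assms by auto
  have cn: "of_nat n = (-1::'a)" using n char_q[where 'a='a] assms by (simp add: of_nat_diff)
  consider "y = 0" | "y = 1" | "y \<noteq> 0" "y \<noteq> 1" by blast
  then show ?thesis
  proof cases
    case 1
    have "(\<Sum>k<n. (0::'a) ^ k) = (\<Sum>k<n. if k = 0 then 1 else 0)"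
      by (rule sum.cong) auto
    also have "\<dots> = 1" using n assms by simp
    finally show ?thesis using 1 by (simp add: tfun_def set)
  next
    case 2
    then show ?thesis using cn by (simp add: tfun_def set)
  next
    case 3
    have "y ^ n = 1" using pow_q1[OF 3(1)] n by simp
    then have "(\<Sum>k<n. y ^ k) = 0" using 3 by (simp add: sum_gp_strict)
    then show ?thesis using 3 by (simp add: tfun_def set)
  qed
qed

lemma inner_u3:
  assumes "CARD('a::{finite,field}) \<ge> 5" "e \<le> 2"
  shows "(\<Sum>u\<in>UNIV. tfun (T + u) * inverse u ^ e) =
         (\<Sum>u\<in>UNIV. u * inverse u ^ e) + (inverse (- T) ^ e - inverse (1 - T) ^ e :: 'a)"
proof -
  have pt: "tfun (T + u) * inverse u ^ e =
     T * inverse u ^ e + u * inverse u ^ e + (if u = - T then inverse (- T) ^ e else 0)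
       - (if u = 1 - T then inverse (1 - T) ^ e else 0)" for u :: 'a
  proof -
    have t3: "CARD('a) \<ge> 3" using assms(1) by simp
    consider "u = - T" | "u = 1 - T" | "u \<noteq> - T" "u \<noteq> 1 - T" by blast
    then show ?thesis
    proof cases
      case 1
      then show ?thesis using tfun_eq[OF t3, of "T + u"] by (simp add: algebra_simps)
    next
      case 2
      have ne: "u \<noteq> - T" using 2 by auto
      have s1: "T + u = 1" using 2 by simp
      have "T * inverse u ^ e + u * inverse u ^ e = (T + u) * inverse u ^ e" by (simp add: algebra_simps)
      then have "T * inverse u ^ e + u * inverse u ^ e = inverse u ^ e" using s1 by simp
      then show ?thesis using tfun_eq[OF t3, of "T + u"] s1 ne 2 by simp
    next
      case 3
      have "T + u \<noteq> 0"
      proof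
        assume "T + u = 0" then have "- T = u" by (simp only: neg_eq_iff_add_eq_0)
        then show False using 3 by simp
      qed
      moreover have "T + u \<noteq> 1" using 3 by (auto simp: algebra_simps)
      ultimately show ?thesis using 3 tfun_eq[OF t3, of "T + u"] by (simp add: algebra_simps)
    qed
  qed
  have "(\<Sum>u\<in>UNIV. tfun (T + u) * inverse u ^ e) =
     T * (\<Sum>u\<in>UNIV. inverse u ^ e) + (\<Sum>u\<in>UNIV. u * inverse u ^ e) + inverse (- T) ^ e - inverse (1 - T) ^ e"
    by (simp add: pt sum.distrib sum_subtractf sum_distrib_left)
  moreover have "(\<Sum>u\<in>UNIV. inverse (u::'a) ^ e) = 0"
    using inv_power_sum[where 'a='a] assms by simp
  ultimately show ?thesis by simp
qed

definition phi :: "nat \<Rightarrow> 'a::{finite,field} \<Rightarrow> 'a" where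
  "phi e s = inverse (- tfun s) ^ e - inverse (1 - tfun s) ^ e"

lemma Z_reduce:
  assumes "CARD('a::{finite,field}) \<ge> 5" "e1 \<le> 2" "e2 \<le> 2" "e3 \<le> 2"
  shows "(\<Sum>u1\<in>UNIV. \<Sum>u2\<in>UNIV. \<Sum>u3\<in>UNIV.
            tfun (tfun (u1 + u2) + u3) * inverse u1 ^ e1 * inverse u2 ^ e2 * inverse u3 ^ e3) =
         (\<Sum>u1\<in>UNIV. \<Sum>u2\<in>UNIV. inverse u1 ^ e1 * inverse u2 ^ e2 * phi e3 ((u1 + u2)::'a))"
proof -
  define A :: 'a where "A = (\<Sum>u\<in>UNIV. u * inverse u ^ e3)"
  have "(\<Sum>u3\<in>UNIV. tfun (tfun (u1 + u2) + u3) * inverse u1 ^ e1 * inverse u2 ^ e2 * inverse u3 ^ e3) =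
        inverse u1 ^ e1 * inverse u2 ^ e2 * A + inverse u1 ^ e1 * inverse u2 ^ e2 * phi e3 (u1 + u2)"
    for u1 u2 :: 'a
  proof -
    have "(\<Sum>u3\<in>UNIV. tfun (tfun (u1 + u2) + u3) * inverse u1 ^ e1 * inverse u2 ^ e2 * inverse u3 ^ e3) =
          inverse u1 ^ e1 * inverse u2 ^ e2 * (\<Sum>u3\<in>UNIV. tfun (tfun (u1 + u2) + u3) * inverse u3 ^ e3)"
      by (simp add: sum_distrib_left algebra_simps)
    also have "\<dots> = inverse u1 ^ e1 * inverse u2 ^ e2 * (A + phi e3 (u1 + u2))"
      using inner_u3[OF assms(1,4), of "tfun (u1 + u2)"] by (simp add: A_def phi_def)
    finally show ?thesis by (simp add: algebra_simps)
  qed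
  then have "(\<Sum>u1\<in>UNIV. \<Sum>u2\<in>UNIV. \<Sum>u3\<in>UNIV.
            tfun (tfun (u1 + u2) + u3) * inverse u1 ^ e1 * inverse u2 ^ e2 * inverse u3 ^ e3) =
        (\<Sum>u1\<in>UNIV. \<Sum>u2\<in>UNIV. inverse u1 ^ e1 * inverse u2 ^ e2 * A) +
        (\<Sum>u1\<in>UNIV. \<Sum>u2\<in>UNIV. inverse u1 ^ e1 * inverse u2 ^ e2 * phi e3 (u1 + u2))"
    by (simp add: sum.distrib)
  moreover have "(\<Sum>u1\<in>UNIV. \<Sum>u2\<in>UNIV. inverse u1 ^ e1 * inverse u2 ^ e2 * A) = 0"
  proof (rule sum.neutral, rule ballI)
    fix u1 :: 'a
    have "(\<Sum>u2\<in>UNIV. inverse u1 ^ e1 * inverse u2 ^ e2 * A) = inverse u1 ^ e1 * A * (\<Sum>u2\<in>UNIV. inverse (u2::'a) ^ e2)"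
      by (simp add: sum_distrib_left algebra_simps)
    moreover have "(\<Sum>u2\<in>UNIV. inverse (u2::'a) ^ e2) = 0" using inv_power_sum[where 'a='a] assms by simp
    ultimately show "(\<Sum>u2\<in>UNIV. inverse u1 ^ e1 * inverse u2 ^ e2 * A) = 0" by simp
  qed
  ultimately show ?thesis by simp
qed

lemma sum_shift: "(\<Sum>x\<in>UNIV. f x) = (\<Sum>s\<in>UNIV. f (s - a::'a::{finite,field}))"
  by (rule sum.reindex_bij_witness[of _ "\<lambda>y. y - a" "\<lambda>y. y + a"]) auto

lemma W_zero_e2:
  assumes "e1 < CARD('a::{finite,field}) - 1"
  shows "(\<Sum>u1\<in>UNIV. \<Sum>u2\<in>UNIV. inverse u1 ^ e1 * f ((u1 + u2)::'a)) = 0"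
proof -
  have "(\<Sum>u1\<in>UNIV. \<Sum>u2\<in>UNIV. inverse u1 ^ e1 * f ((u1 + u2)::'a)) =
        (\<Sum>u1\<in>UNIV. inverse u1 ^ e1 * (\<Sum>s\<in>UNIV. f s))"
    by (simp add: sum_distrib_left[symmetric] sum_transl)
  also have "\<dots> = (\<Sum>u1\<in>UNIV. inverse u1 ^ e1) * (\<Sum>s\<in>UNIV. f s)"
    by (simp add: sum_distrib_right)
  also have "\<dots> = 0" using inv_power_sum[OF assms] by simp
  finally show ?thesis .
qed

lemma W_zero:
  assumes "CARD('a::{finite,field}) \<ge> 5" "e1 + e2 + e3 \<le> 2"
  shows "(\<Sum>u1\<in>UNIV. \<Sum>u2\<in>UNIV. inverse u1 ^ e1 * inverse u2 ^ e2 * phi e3 ((u1 + u2)::'a)) = 0"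
proof -
  consider "e3 = 0" | "e2 = 0" | "e1 = 0" using assms by linarith
  then show ?thesis
  proof cases
    case 1 then show ?thesis by (simp add: phi_def)
  next
    case 2
    then show ?thesis using W_zero_e2[where 'a='a, of e1 "phi e3"] assms by simp
  next
    case 3
    have "(\<Sum>u1\<in>UNIV. \<Sum>u2\<in>UNIV. inverse u1 ^ e1 * inverse u2 ^ e2 * phi e3 ((u1 + u2)::'a)) =
          (\<Sum>u2\<in>UNIV. \<Sum>u1\<in>UNIV. inverse u2 ^ e2 * phi e3 ((u2 + u1)::'a))"
      using 3 by (subst sum.swap) (simp add: add.commute)
    then show ?thesis using W_zero_e2[where 'a='a, of e2 "phi e3"] assms by simp
  qed
qed

lemma N_eq:
  assumes "CARD('a::{finite,field}) \<ge> 5"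
  shows "(\<Sum>u\<in>UNIV. inverse u * inverse (s - u)) = - 2 * inverse (s::'a) ^ 2"
proof (cases "s = 0")
  case True
  have "(\<Sum>u\<in>UNIV. inverse (u::'a) ^ 2) = 0" using inv_power_sum[where 'a='a] assms by simp
  then show ?thesis using True by (simp add: sum_negf power2_eq_square)
next
  case False
  have pt: "inverse u * inverse (s - u) = inverse s * inverse u + inverse s * inverse (s - u)
      - (if u = 0 then inverse s ^ 2 else 0) - (if u = s then inverse s ^ 2 else 0)" for u :: 'a
  proof -
    consider "u = 0" | "u = s" | "u \<noteq> 0" "u \<noteq> s" by blast
    then show ?thesis
    proof cases
      case 1 then show ?thesis using False by (simp add: power2_eq_square)
    next
      case 2 then show ?thesis using False by (simp add: power2_eq_square)
    next
      case 3
      then have "s - u \<noteq> 0" by simp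
      then show ?thesis using 3 False by (simp add: field_simps)
    qed
  qed
  have s1: "(\<Sum>u\<in>UNIV. inverse (u::'a)) = 0" using inv_power_sum[where 'a='a, of 1] assms by simp
  have s2: "(\<Sum>u\<in>UNIV. inverse (s - u::'a)) = 0" using sum_refl[of "\<lambda>x. inverse x" s] s1 by simp
  show ?thesis
    by (simp add: pt sum_subtractf sum.distrib sum_distrib_left[symmetric] s1 s2)
qed

lemma phi_sum:
  assumes "CARD('a::{finite,field}) \<ge> 5"
  shows "(\<Sum>s\<in>UNIV. phi 1 s * inverse (s::'a) ^ 2) = 3"
proof -
  have t3: "CARD('a) \<ge> 3" using assms by simp
  have pt: "phi 1 s * (inverse s ^ 2) = - (inverse s ^ 3) - (inverse s ^ 2) - inverse s - inverse (1 - s)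
      + (if s = 0 then 1 else 0) + (if s = 1 then 2 else 0)" for s :: 'a
  proof -
    consider "s = 0" | "s = 1" | "s \<noteq> 0" "s \<noteq> 1" by blast
    then show ?thesis
    proof cases
      case 1 then show ?thesis using tfun_eq[OF t3, of 0] by (simp add: phi_def)
    next
      case 2 then show ?thesis using tfun_eq[OF t3, of 1] by (simp add: phi_def)
    next
      case 3
      then have "1 - s \<noteq> 0" by simp
      then show ?thesis using 3 tfun_eq[OF t3, of s] by (simp add: phi_def field_simps) (simp add: algebra_simps eval_nat_numeral)
    qed
  qed
  have s1: "(\<Sum>u\<in>UNIV. inverse (u::'a) ^ k) = 0" if "k \<le> 3" for k
    using inv_power_sum[where 'a='a, of k] assms that by simp
  have s2: "(\<Sum>u\<in>UNIV. inverse (1 - u::'a)) = 0" using sum_refl[where 'a='a, of "\<lambda>x. inverse x" 1] s1[of 1] by simp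
  have s1': "(\<Sum>u\<in>UNIV. inverse (u::'a)) = 0" using s1[of 1] by simp
  have "(\<Sum>s\<in>UNIV. phi 1 s * inverse (s::'a) ^ 2) = (\<Sum>s\<in>UNIV. - (inverse s ^ 3) - (inverse s ^ 2) - inverse s - inverse (1 - s)
      + (if s = 0 then 1 else 0) + (if s = 1 then 2 else 0))"
    by (rule sum.cong[OF refl pt])
  also have "\<dots> = 3"
    by (simp add: sum_subtractf sum.distrib s1 s1' s2 sum_negf)
  finally show ?thesis .
qed

lemma W111:
  assumes "CARD('a::{finite,field}) \<ge> 5"
  shows "(\<Sum>u1\<in>UNIV. \<Sum>u2\<in>UNIV. inverse u1 ^ 1 * inverse u2 ^ 1 * phi 1 ((u1 + u2)::'a)) = - 6"
proof -
  have "(\<Sum>u1\<in>UNIV. \<Sum>u2\<in>UNIV. inverse u1 ^ 1 * inverse u2 ^ 1 * phi 1 ((u1 + u2)::'a)) =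
        (\<Sum>u1\<in>UNIV. \<Sum>s\<in>UNIV. inverse u1 * inverse (s - u1) * phi 1 s)"
  proof (rule sum.cong[OF refl])
    fix u1 :: 'a
    show "(\<Sum>u2\<in>UNIV. inverse u1 ^ 1 * inverse u2 ^ 1 * phi 1 (u1 + u2)) =
        (\<Sum>s\<in>UNIV. inverse u1 * inverse (s - u1) * phi 1 s)"
      using sum_shift[of "\<lambda>u2. inverse u1 ^ 1 * inverse u2 ^ 1 * phi 1 (u1 + u2)" u1] by simp
  qed
  also have "\<dots> = (\<Sum>s\<in>UNIV. (\<Sum>u1\<in>UNIV. inverse u1 * inverse (s - u1)) * phi 1 s)"
    by (subst sum.swap) (simp add: sum_distrib_right)
  also have "\<dots> = (\<Sum>s\<in>UNIV. - 2 * (phi 1 s * inverse s ^ 2))"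
    using N_eq[OF assms] by (simp add: algebra_simps)
  also have "\<dots> = - 2 * (\<Sum>s\<in>UNIV. phi 1 s * inverse s ^ 2)"
    by (simp only: sum_distrib_left)
  also have "\<dots> = - 2 * 3"
    by (simp only: phi_sum[OF assms])
  finally show ?thesis by simp
qed

lemma swap6:
  "(\<Sum>x1\<in>X. \<Sum>x2\<in>Y. \<Sum>x3\<in>Z. \<Sum>a\<in>A. \<Sum>b\<in>B. \<Sum>d\<in>D. T x1 x2 x3 a b d) =
   (\<Sum>a\<in>A. \<Sum>b\<in>B. \<Sum>d\<in>D. \<Sum>x1\<in>X. \<Sum>x2\<in>Y. \<Sum>x3\<in>Z. T x1 x2 x3 a b d)"
proof -
  define Q where "Q x1 x2 x3 = (\<Sum>(a,b,d)\<in>A\<times>B\<times>D. T x1 x2 x3 a b d)" for x1 x2 x3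
  define R where "R a b d = (\<Sum>(x1,x2,x3)\<in>X\<times>Y\<times>Z. T x1 x2 x3 a b d)" for a b d
  have q: "(\<Sum>a\<in>A. \<Sum>b\<in>B. \<Sum>d\<in>D. T x1 x2 x3 a b d) = Q x1 x2 x3" for x1 x2 x3
    unfolding Q_def by (simp only: sum.cartesian_product)
  have r: "(\<Sum>x1\<in>X. \<Sum>x2\<in>Y. \<Sum>x3\<in>Z. T x1 x2 x3 a b d) = R a b d" for a b d
    unfolding R_def by (simp only: sum.cartesian_product)
  have "(\<Sum>x1\<in>X. \<Sum>x2\<in>Y. \<Sum>x3\<in>Z. Q x1 x2 x3) = (\<Sum>(x1,x2,x3)\<in>X\<times>Y\<times>Z. Q x1 x2 x3)"
    by (simp only: sum.cartesian_product)
  also have "\<dots> = (\<Sum>(x1,x2,x3)\<in>X\<times>Y\<times>Z. \<Sum>(a,b,d)\<in>A\<times>B\<times>D. T x1 x2 x3 a b d)"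
    unfolding Q_def ..
  also have "\<dots> = (\<Sum>(a,b,d)\<in>A\<times>B\<times>D. \<Sum>(x1,x2,x3)\<in>X\<times>Y\<times>Z. T x1 x2 x3 a b d)"
    by (simp only: split_def) (rule sum.swap)
  also have "\<dots> = (\<Sum>(a,b,d)\<in>A\<times>B\<times>D. R a b d)"
    unfolding R_def ..
  also have "\<dots> = (\<Sum>a\<in>A. \<Sum>b\<in>B. \<Sum>d\<in>D. R a b d)"
    by (simp only: sum.cartesian_product)
  finally show ?thesis by (simp only: q r)
qed

lemma sep3:
  "(\<Sum>a\<in>A. \<Sum>b\<in>B. \<Sum>d\<in>D. k * (f1 a * f2 b * f3 d)) =
   (k::'a::comm_semiring_1) * (\<Sum>a\<in>A. f1 a) * (\<Sum>b\<in>B. f2 b) * (\<Sum>d\<in>D. f3 d)"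
proof -
  have 1: "(\<Sum>d\<in>D. k * (f1 a * f2 b * f3 d)) = (k * f1 a * f2 b) * (\<Sum>d\<in>D. f3 d)" for a b
    by (simp add: sum_distrib_left mult.assoc)
  have 2: "(\<Sum>b\<in>B. (k * f1 a * f2 b) * S3) = (k * f1 a) * (\<Sum>b\<in>B. f2 b) * S3" for a S3
    by (simp add: sum_distrib_left sum_distrib_right mult.assoc)
  have 3: "(\<Sum>a\<in>A. (k * f1 a) * S2 * S3) = k * (\<Sum>a\<in>A. f1 a) * S2 * S3" for S2 S3
    by (simp add: sum_distrib_left sum_distrib_right mult.assoc)
  show ?thesis by (simp only: 1 2 3)
qed

lemma eval3_nested:
  "eval3 c x1 x2 x3 = (\<Sum>a\<in>{0..<CARD('a)}. \<Sum>b\<in>{0..<CARD('a)}. \<Sum>d\<in>{0..<CARD('a)}.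
      c (a, b, d) * x1 ^ a * x2 ^ b * (x3::'a::{finite,field}) ^ d)"
  by (simp add: eval3_def sum.cartesian_product)

lemma coeff_extract:
  assumes "reduced3 (c :: nat \<times> nat \<times> nat \<Rightarrow> 'a::{finite,field})"
    and "1 \<le> a" "a < CARD('a)" "1 \<le> b" "b < CARD('a)" "1 \<le> d" "d < CARD('a)"
  shows "(\<Sum>x1\<in>UNIV. \<Sum>x2\<in>UNIV. \<Sum>x3\<in>UNIV. eval3 c x1 x2 x3 *
            (x1 ^ (CARD('a) - 1 - a) * x2 ^ (CARD('a) - 1 - b) * x3 ^ (CARD('a) - 1 - d))) = - c (a, b, d)"
proof -
  define n where "n = CARD('a)"
  define S where "S = {0..<n}"
  define P where "P k = (\<Sum>x\<in>UNIV. (x::'a) ^ k)" for k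
  have "(\<Sum>x1\<in>UNIV. \<Sum>x2\<in>UNIV. \<Sum>x3\<in>UNIV. eval3 c x1 x2 x3 *
            (x1 ^ (n - 1 - a) * x2 ^ (n - 1 - b) * x3 ^ (n - 1 - d))) =
        (\<Sum>x1\<in>UNIV. \<Sum>x2\<in>UNIV. \<Sum>x3\<in>UNIV. \<Sum>a'\<in>S. \<Sum>b'\<in>S. \<Sum>d'\<in>S.
            c (a', b', d') * (x1 ^ (a' + (n - 1 - a)) * x2 ^ (b' + (n - 1 - b)) * x3 ^ (d' + (n - 1 - d))))"
    by (simp add: eval3_nested S_def n_def sum_distrib_right sum_distrib_left power_add algebra_simps)
  also have "\<dots> = (\<Sum>a'\<in>S. \<Sum>b'\<in>S. \<Sum>d'\<in>S. \<Sum>x1\<in>UNIV. \<Sum>x2\<in>UNIV. \<Sum>x3\<in>UNIV.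
            c (a', b', d') * (x1 ^ (a' + (n - 1 - a)) * x2 ^ (b' + (n - 1 - b)) * x3 ^ (d' + (n - 1 - d))))"
    by (rule swap6)
  also have "\<dots> = (\<Sum>a'\<in>S. \<Sum>b'\<in>S. \<Sum>d'\<in>S.
            c (a', b', d') * P (a' + (n - 1 - a)) * P (b' + (n - 1 - b)) * P (d' + (n - 1 - d)))"
    unfolding P_def by (intro sum.cong refl) (rule sep3)
  also have "\<dots> = (\<Sum>a'\<in>S. \<Sum>b'\<in>S. \<Sum>d'\<in>S.
            (if a' = a then if b' = b then if d' = d then - c (a', b', d') else 0 else 0 else 0))"
  proof (intro sum.cong refl)
    fix a' b' d' assume h: "a' \<in> S" "b' \<in> S" "d' \<in> S"
    have Pk: "P (k + (n - 1 - j)) = (if k = j then -1 else 0)" if "k < n" "1 \<le> j" "j < n" for k j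
    proof -
      have "k + (n - 1 - j) \<le> 2 * n - 3" using that by linarith
      then have "P (k + (n - 1 - j)) = (if k + (n - 1 - j) = n - 1 then -1 else 0)"
        unfolding P_def n_def by (rule power_sum_gen)
      moreover have "(k + (n - 1 - j) = n - 1) \<longleftrightarrow> k = j" using that by linarith
      ultimately show ?thesis by simp
    qed
    show "c (a', b', d') * P (a' + (n - 1 - a)) * P (b' + (n - 1 - b)) * P (d' + (n - 1 - d)) =
          (if a' = a then if b' = b then if d' = d then - c (a', b', d') else 0 else 0 else 0)"
      using h assms Pk[of a' a] Pk[of b' b] Pk[of d' d] by (simp add: S_def n_def)
  qed
  also have "\<dots> = - c (a, b, d)"
  proof -
    have inS: "a \<in> S" "b \<in> S" "d \<in> S" "finite S" using assms by (auto simp: S_def n_def)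
    have 1: "(\<Sum>d'\<in>S. (if a' = a then if b' = b then if d' = d then - c (a', b', d') else 0 else 0 else 0))
       = (if a' = a then if b' = b then - c (a', b', d) else 0 else 0)" for a' b'
      using inS by (cases "a' = a"; cases "b' = b") auto
    have 2: "(\<Sum>b'\<in>S. (if a' = a then if b' = b then - c (a', b', d) else 0 else 0))
       = (if a' = a then - c (a', b, d) else 0)" for a'
      using inS by (cases "a' = a") auto
    show ?thesis using inS by (simp only: 1 2) simp
  qed
  finally show ?thesis by (simp add: n_def)
qed

definition Lc :: "'a::{finite,field} \<Rightarrow> nat \<Rightarrow> 'a" where
  "Lc y a = (if a = 0 then 1 else 0) - of_nat ((CARD('a) - 1) choose a) * (- y) ^ (CARD('a) - 1 - a)"

lemma L_sum: "(\<Sum>a\<in>{0..<CARD('a)}. Lc y a * x ^ a) = (if x = y then 1 else (0::'a::{finite,field}))"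
proof -
  obtain n where n: "n = CARD('a) - 1" by blast
  have n1: "n \<ge> 1" using n card_ge2[where 'a='a] by simp
  have S: "{0..<CARD('a)} = {..n}" using n card_ge2[where 'a='a] by auto
  have pt: "Lc y a * x ^ a = (if a = 0 then 1 else 0) - of_nat (n choose a) * x ^ a * (- y) ^ (n - a)" for a
    unfolding Lc_def n[symmetric] by (simp add: algebra_simps)
  have "(\<Sum>a\<in>{..n}. Lc y a * x ^ a) =
      (\<Sum>a\<in>{..n}. (if a = 0 then 1 else 0)) - (\<Sum>a\<in>{..n}. of_nat (n choose a) * x ^ a * (- y) ^ (n - a))"
    by (simp only: pt sum_subtractf)
  also have "\<dots> = 1 - (x + - y) ^ n"
    by (simp only: binomial_ring[of x "- y" n]) simp
  also have "\<dots> = (if x = y then 1 else 0)"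
  proof (cases "x = y")
    case True then show ?thesis using n1 by simp
  next
    case False
    then have "x - y \<noteq> 0" by simp
    then have "(x - y) ^ n = 1" using pow_q1 n by blast
    then show ?thesis using False by simp
  qed
  finally show ?thesis by (simp add: S)
qed

lemma interp:
  fixes F :: "'a::{finite,field} \<Rightarrow> 'a \<Rightarrow> 'a \<Rightarrow> 'a"
  shows "\<exists>c :: nat \<times> nat \<times> nat \<Rightarrow> 'a. reduced3 c \<and> (\<forall>x1 x2 x3. eval3 c x1 x2 x3 = F x1 x2 x3)"
proof -
  define S where "S = {0..<CARD('a)}"
  define c where "c = (\<lambda>(a,b,d). if a < CARD('a) \<and> b < CARD('a) \<and> d < CARD('a) then
      (\<Sum>y1\<in>UNIV. \<Sum>y2\<in>UNIV. \<Sum>y3\<in>UNIV. F y1 y2 y3 * (Lc y1 a * Lc y2 b * Lc y3 d)) else 0)"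
  have red: "reduced3 c" unfolding reduced3_def c_def by auto
  have ev: "eval3 c x1 x2 x3 = F x1 x2 x3" for x1 x2 x3
  proof -
    have "eval3 c x1 x2 x3 = (\<Sum>a\<in>S. \<Sum>b\<in>S. \<Sum>d\<in>S.
       \<Sum>y1\<in>UNIV. \<Sum>y2\<in>UNIV. \<Sum>y3\<in>UNIV. F y1 y2 y3 * ((Lc y1 a * x1 ^ a) * (Lc y2 b * x2 ^ b) * (Lc y3 d * x3 ^ d)))"
      unfolding eval3_nested S_def
      by (intro sum.cong refl) (simp add: c_def sum_distrib_right sum_distrib_left algebra_simps)
    also have "\<dots> = (\<Sum>y1\<in>UNIV. \<Sum>y2\<in>UNIV. \<Sum>y3\<in>UNIV. \<Sum>a\<in>S. \<Sum>b\<in>S. \<Sum>d\<in>S.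
       F y1 y2 y3 * ((Lc y1 a * x1 ^ a) * (Lc y2 b * x2 ^ b) * (Lc y3 d * x3 ^ d)))"
      by (rule swap6[symmetric])
    also have "\<dots> = (\<Sum>y1\<in>UNIV. \<Sum>y2\<in>UNIV. \<Sum>y3\<in>UNIV.
       F y1 y2 y3 * (\<Sum>a\<in>S. Lc y1 a * x1 ^ a) * (\<Sum>b\<in>S. Lc y2 b * x2 ^ b) * (\<Sum>d\<in>S. Lc y3 d * x3 ^ d))"
      by (intro sum.cong refl) (rule sep3)
    also have "\<dots> = (\<Sum>y1\<in>UNIV. \<Sum>y2\<in>UNIV. \<Sum>y3\<in>UNIV.
       (if y1 = x1 then if y2 = x2 then if y3 = x3 then F y1 y2 y3 else 0 else 0 else 0))"
      unfolding S_def L_sum by (intro sum.cong refl) auto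
    also have "\<dots> = F x1 x2 x3"
    proof -
      have 1: "(\<Sum>y3\<in>UNIV. (if y1 = x1 then if y2 = x2 then if y3 = x3 then F y1 y2 y3 else 0 else 0 else 0))
         = (if y1 = x1 then if y2 = x2 then F y1 y2 x3 else 0 else 0)" for y1 y2
        by (cases "y1 = x1"; cases "y2 = x2") auto
      have 2: "(\<Sum>y2\<in>UNIV. (if y1 = x1 then if y2 = x2 then F y1 y2 x3 else 0 else 0))
         = (if y1 = x1 then F y1 x2 x3 else 0)" for y1
        by (cases "y1 = x1") auto
      show ?thesis by (simp only: 1 2) simp
    qed
    finally show ?thesis .
  qed
  show ?thesis using red ev by blast
qed

definition gf :: "'a::{finite,field} \<Rightarrow> 'a \<Rightarrow> 'a \<Rightarrow> 'a" where
  "gf x1 x2 x3 = tfun (tfun (x1 ^ (CARD('a) - 2) + x2 ^ (CARD('a) - 2)) + x3 ^ (CARD('a) - 2))"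

lemma Zg:
  assumes "CARD('a::{finite,field}) \<ge> 5"
  shows "(\<Sum>x1\<in>UNIV. \<Sum>x2\<in>UNIV. \<Sum>x3\<in>UNIV. gf x1 x2 x3 * (x1 ^ e1 * x2 ^ e2 * (x3::'a) ^ e3)) =
    (\<Sum>u1\<in>UNIV. \<Sum>u2\<in>UNIV. \<Sum>u3\<in>UNIV.
            tfun (tfun (u1 + u2) + u3) * inverse u1 ^ e1 * inverse u2 ^ e2 * inverse (u3::'a) ^ e3)"
proof -
  define K where "K u1 u2 u3 = tfun (tfun (u1 + u2) + u3) * inverse u1 ^ e1 * inverse u2 ^ e2 * inverse (u3::'a) ^ e3" for u1 u2 u3
  have t3: "CARD('a) \<ge> 3" using assms by simp
  have pt: "gf x1 x2 x3 * (x1 ^ e1 * x2 ^ e2 * x3 ^ e3) = K (inverse x1) (inverse x2) (inverse x3)" for x1 x2 x3 :: 'a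
    by (simp add: gf_def K_def inv_pow[OF t3] mult.assoc)
  have "(\<Sum>x1\<in>UNIV. \<Sum>x2\<in>UNIV. \<Sum>x3\<in>UNIV. gf x1 x2 x3 * (x1 ^ e1 * x2 ^ e2 * (x3::'a) ^ e3)) =
      (\<Sum>x1\<in>UNIV. \<Sum>x2\<in>UNIV. \<Sum>x3\<in>UNIV. K (inverse x1) (inverse x2) (inverse x3))"
    by (simp only: pt)
  also have "\<dots> = (\<Sum>x1\<in>UNIV. \<Sum>x2\<in>UNIV. \<Sum>u3\<in>UNIV. K (inverse x1) (inverse x2) u3)"
    by (rule sum.cong[OF refl], rule sum.cong[OF refl], rule sum_inv_reindex)
  also have "\<dots> = (\<Sum>x1\<in>UNIV. \<Sum>u2\<in>UNIV. \<Sum>u3\<in>UNIV. K (inverse x1) u2 u3)"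
    by (rule sum.cong[OF refl], rule sum_inv_reindex[of "\<lambda>v. \<Sum>u3\<in>UNIV. K _ v u3"])
  also have "\<dots> = (\<Sum>u1\<in>UNIV. \<Sum>u2\<in>UNIV. \<Sum>u3\<in>UNIV. K u1 u2 u3)"
    by (rule sum_inv_reindex[of "\<lambda>v. \<Sum>u2\<in>UNIV. \<Sum>u3\<in>UNIV. K v u2 u3"])
  finally show ?thesis by (simp add: K_def)
qed

lemma coef_g:
  assumes q5: "CARD('a::{finite,field}) \<ge> 5" and red: "reduced3 (c :: nat \<times> nat \<times> nat \<Rightarrow> 'a)"
    and ev: "\<forall>x1 x2 x3. eval3 c x1 x2 x3 = gf x1 x2 x3"
    and "CARD('a) - 3 \<le> a" "a < CARD('a)" "CARD('a) - 3 \<le> b" "b < CARD('a)" "CARD('a) - 3 \<le> d" "d < CARD('a)"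
  shows "c (a, b, d) = - (\<Sum>u1\<in>UNIV. \<Sum>u2\<in>UNIV. inverse u1 ^ (CARD('a) - 1 - a) * inverse u2 ^ (CARD('a) - 1 - b)
             * phi (CARD('a) - 1 - d) ((u1 + u2)::'a))"
proof -
  have ab: "1 \<le> a" "1 \<le> b" "1 \<le> d" using assms by auto
  have "- c (a, b, d) = (\<Sum>x1\<in>UNIV. \<Sum>x2\<in>UNIV. \<Sum>x3\<in>UNIV. eval3 c x1 x2 x3 *
            (x1 ^ (CARD('a) - 1 - a) * x2 ^ (CARD('a) - 1 - b) * x3 ^ (CARD('a) - 1 - d)))"
    using coeff_extract[OF red ab(1) assms(5) ab(2) assms(7) ab(3) assms(9)] by simp
  also have "\<dots> = (\<Sum>x1\<in>UNIV. \<Sum>x2\<in>UNIV. \<Sum>x3\<in>UNIV. gf x1 x2 x3 *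
            (x1 ^ (CARD('a) - 1 - a) * x2 ^ (CARD('a) - 1 - b) * x3 ^ (CARD('a) - 1 - d)))"
    using ev by simp
  also have "\<dots> = (\<Sum>u1\<in>UNIV. \<Sum>u2\<in>UNIV. \<Sum>u3\<in>UNIV.
            tfun (tfun (u1 + u2) + u3) * inverse u1 ^ (CARD('a) - 1 - a) * inverse u2 ^ (CARD('a) - 1 - b)
              * inverse (u3::'a) ^ (CARD('a) - 1 - d))"
    by (rule Zg[OF q5])
  also have "\<dots> = (\<Sum>u1\<in>UNIV. \<Sum>u2\<in>UNIV. inverse u1 ^ (CARD('a) - 1 - a) * inverse u2 ^ (CARD('a) - 1 - b)
             * phi (CARD('a) - 1 - d) ((u1 + u2)::'a))"
    by (rule Z_reduce) (use assms in auto)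
  finally show ?thesis by (simp add: minus_equation_iff[of "c (a, b, d)"])
qed

theorem mainTheorem15:
  fixes p r :: nat
  assumes "prime p" "p \<noteq> 2" "p \<noteq> 3" "CARD('a::{finite,field}) = p ^ r"
  shows "(\<exists>c :: nat \<times> nat \<times> nat \<Rightarrow> 'a. reduced3 c \<and>
            (\<forall>x1 x2 x3. eval3 c x1 x2 x3 =
               tfun (tfun (x1 ^ (CARD('a) - 2) + x2 ^ (CARD('a) - 2)) + x3 ^ (CARD('a) - 2))))
       \<and> (\<forall>c :: nat \<times> nat \<times> nat \<Rightarrow> 'a. reduced3 c \<and>
            (\<forall>x1 x2 x3. eval3 c x1 x2 x3 =
               tfun (tfun (x1 ^ (CARD('a) - 2) + x2 ^ (CARD('a) - 2)) + x3 ^ (CARD('a) - 2)))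
            \<longrightarrow> totdeg3 c = 3 * (CARD('a) - 2))"
proof -
  define q where "q = CARD('a)"
  have p5: "p \<ge> 5"
  proof -
    have "p \<ge> 2" using assms(1) by (simp add: prime_ge_2_nat)
    moreover have "p \<noteq> 4"
    proof
      assume "p = 4"
      then have "prime (4::nat)" using assms(1) by simp
      moreover have "(2::nat) dvd 4" by simp
      ultimately show False by (auto dest: prime_nat_iff[THEN iffD1])
    qed
    ultimately show ?thesis using assms(2,3) by linarith
  qed
  have r0: "r \<noteq> 0"
  proof
    assume "r = 0" then have "CARD('a) = 1" using assms(4) by simp
    then show False using card_ge2[where 'a='a] by simp
  qed
  have q5: "CARD('a) \<ge> 5"
  proof -
    have "p \<le> p ^ r" using r0 p5 by (simp add: self_le_power)
    then show ?thesis using assms(4) p5 by simp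
  qed
  have six: "(6::'a) \<noteq> 0"
  proof
    assume h6: "(6::'a) = 0"
    have "of_nat p ^ r = (0::'a)" using char_q[where 'a='a] assms(4) by (simp add: of_nat_power)
    then have "of_nat p = (0::'a)" by simp
    then have d1: "CHAR('a) dvd p" by (simp add: of_nat_eq_0_iff_char_dvd)
    have "of_nat 6 = (0::'a)" using h6 by simp
    then have d2: "CHAR('a) dvd 6" by (simp only: of_nat_eq_0_iff_char_dvd)
    have "\<not> p dvd 6"
    proof
      assume "p dvd 6"
      then have "p \<le> 6" by (simp add: dvd_imp_le)
      then have "p = 5 \<or> p = 6" using p5 by linarith
      then show False
      proof
        assume "p = 5" then show False using \<open>p dvd 6\<close> by simp
      next
        assume p6: "p = 6" then have "(2::nat) dvd p" by simp
        then have "(2::nat) = 1 \<or> 2 = p" using assms(1) unfolding prime_nat_iff by blast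
        then show False using p6 by simp
      qed
    qed
    then have "coprime p 6" using assms(1) by (simp add: prime_imp_coprime)
    then have "CHAR('a) dvd 1" using d1 d2 by (metis coprime_common_divisor)
    then have "CHAR('a) = 1" by simp
    then have "of_nat 1 = (0::'a)" by (simp only: of_nat_eq_0_iff_char_dvd) simp
    then show False by simp
  qed
  have gfe: "(\<lambda>x1 x2 x3. tfun (tfun (x1 ^ (CARD('a) - 2) + x2 ^ (CARD('a) - 2)) + x3 ^ (CARD('a) - 2))) = (gf :: 'a \<Rightarrow> _)"
    by (simp add: gf_def fun_eq_iff)
  show ?thesis
  proof (intro conjI allI impI)
    show "\<exists>c :: nat \<times> nat \<times> nat \<Rightarrow> 'a. reduced3 c \<and>
            (\<forall>x1 x2 x3. eval3 c x1 x2 x3 =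
               tfun (tfun (x1 ^ (CARD('a) - 2) + x2 ^ (CARD('a) - 2)) + x3 ^ (CARD('a) - 2)))"
      using interp[of gf] by (simp add: gf_def)
  next
    fix c :: "nat \<times> nat \<times> nat \<Rightarrow> 'a"
    assume h: "reduced3 c \<and> (\<forall>x1 x2 x3. eval3 c x1 x2 x3 =
               tfun (tfun (x1 ^ (CARD('a) - 2) + x2 ^ (CARD('a) - 2)) + x3 ^ (CARD('a) - 2)))"
    then have red: "reduced3 c" and ev: "\<forall>x1 x2 x3. eval3 c x1 x2 x3 = gf x1 x2 x3"
      by (auto simp: gf_def)
    define M where "M = {a + b + d | a b d. c (a, b, d) \<noteq> 0}"
    have top: "c (q - 2, q - 2, q - 2) = 6"
    proof -
      have "c (q - 2, q - 2, q - 2) = - (\<Sum>u1\<in>UNIV. \<Sum>u2\<in>UNIV. inverse u1 ^ 1 * inverse u2 ^ 1 * phi 1 ((u1 + u2)::'a))"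
        using coef_g[OF q5 red ev, of "q - 2" "q - 2" "q - 2"] q5 by (simp add: q_def numeral_eq_Suc)
      also have "\<dots> = 6" using W111[OF q5] by simp
      finally show ?thesis .
    qed
    have bound: "a + b + d \<le> 3 * (q - 2)" if "c (a, b, d) \<noteq> 0" for a b d
    proof (rule ccontr)
      assume nt: "\<not> ?thesis"
      have lt: "a < q" "b < q" "d < q" using red that by (auto simp: reduced3_def q_def)
      define e1 where "e1 = q - 1 - a"
      define e2 where "e2 = q - 1 - b"
      define e3 where "e3 = q - 1 - d"
      have es: "e1 + e2 + e3 \<le> 2" using lt nt q5 by (simp add: e1_def e2_def e3_def q_def)
      have ge: "q - 3 \<le> a" "q - 3 \<le> b" "q - 3 \<le> d" using lt nt by linarith+
      have "c (a, b, d) = - (\<Sum>u1\<in>UNIV. \<Sum>u2\<in>UNIV. inverse u1 ^ e1 * inverse u2 ^ e2 * phi e3 ((u1 + u2)::'a))"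
        using coef_g[OF q5 red ev, of a b d] lt ge by (simp add: q_def e1_def e2_def e3_def)
      also have "\<dots> = 0" using W_zero[OF q5 es] by simp
      finally show False using that by simp
    qed
    have fin: "finite M"
    proof (rule finite_subset)
      show "M \<subseteq> {..3 * q}"
      proof
        fix m assume "m \<in> M"
        then obtain a b d where "m = a + b + d" "c (a, b, d) \<noteq> 0" by (auto simp: M_def)
        moreover then have "a < q" "b < q" "d < q" using red by (auto simp: reduced3_def q_def)
        ultimately show "m \<in> {..3 * q}" by simp
      qed
    qed simp
    have mem: "3 * (q - 2) \<in> M"
    proof -
      have "c (q - 2, q - 2, q - 2) \<noteq> 0" using top six by simp
      then have "(q - 2) + (q - 2) + (q - 2) \<in> M" unfolding M_def by blast
      moreover have "3 * (q - 2) = (q - 2) + (q - 2) + (q - 2)" by simp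
      ultimately show ?thesis by argo
    qed
    have "Max M = 3 * (q - 2)"
      by (rule Max_eqI[OF fin _ mem]) (auto simp: M_def intro: bound)
    then show "totdeg3 c = 3 * (CARD('a) - 2)" by (simp add: totdeg3_def M_def q_def)
  qed
qed

end
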